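(* Let $G$ be a finite group. For all subsets $X,Y\subseteq G$ with $X^G=X$ and $Y^G=Y$ we have $[X,{}_MY]=[[X,G],{}_MY]$.
   Context: $[x,y]=x^{-1}y^{-1}xy$, $x^y=y^{-1}xy$, $X^G=\{x^g:x\in X,g\in G\}$. For subsets $A,B\subseteq G$, $[A,B]$ is the subgroup generated by $\{[a,b]:a\in A,b\in B\}$, and $[A,{}_kB]=[\cdots[[A,B],B]\cdots,B]$ with $k$ copies of $B$. $M=M(G)\in\mathbb{N}$ is fixed such that $[A,{}_MB]=[A,{}_iB]$ for all $i\ge M$ and all $A,B\subseteq G$ with $A^G=A$, $B^G=B$. *)

theory Defs
  imports "HOL-Algebra.Generated_Groups"
begin

definition gcomm :: "('a, 'b) monoid_scheme \<Rightarrow> 'a \<Rightarrow> 'a \<Rightarrow> 'a" where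
  "gcomm G x y = inv\<^bsub>G\<^esub> x \<otimes>\<^bsub>G\<^esub> inv\<^bsub>G\<^esub> y \<otimes>\<^bsub>G\<^esub> x \<otimes>\<^bsub>G\<^esub> y"

definition comm_set :: "('a, 'b) monoid_scheme \<Rightarrow> 'a set \<Rightarrow> 'a set \<Rightarrow> 'a set" where
  "comm_set G A B = generate G {gcomm G a b | a b. a \<in> A \<and> b \<in> B}"

definition iter_comm :: "('a, 'b) monoid_scheme \<Rightarrow> 'a set \<Rightarrow> 'a set \<Rightarrow> nat \<Rightarrow> 'a set" where
  "iter_comm G A B k = ((\<lambda>C. comm_set G C B) ^^ k) A"

definition normal_subset :: "('a, 'b) monoid_scheme \<Rightarrow> 'a set \<Rightarrow> bool" where
  "normal_subset G A \<longleftrightarrow> A \<subseteq> carrier G \<and>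
     {inv\<^bsub>G\<^esub> g \<otimes>\<^bsub>G\<^esub> a \<otimes>\<^bsub>G\<^esub> g | a g. a \<in> A \<and> g \<in> carrier G} = A"

end

theory Submission
  imports Defs
begin

context group begin

lemma cancel1[simp]: "x \<in> carrier G \<Longrightarrow> z \<in> carrier G \<Longrightarrow> x \<otimes> (inv x \<otimes> z) = z"
  by (simp add: m_assoc[symmetric])
lemma cancel2[simp]: "x \<in> carrier G \<Longrightarrow> z \<in> carrier G \<Longrightarrow> inv x \<otimes> (x \<otimes> z) = z"
  by (simp add: m_assoc[symmetric])

lemma gcomm_closed[simp]: "x \<in> carrier G \<Longrightarrow> y \<in> carrier G \<Longrightarrow> gcomm G x y \<in> carrier G"
  by (simp add: gcomm_def)

lemma gcomm_conj: "x \<in> carrier G \<Longrightarrow> y \<in> carrier G \<Longrightarrow> g \<in> carrier G \<Longrightarrow>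
   inv g \<otimes> gcomm G x y \<otimes> g = gcomm G (inv g \<otimes> x \<otimes> g) (inv g \<otimes> y \<otimes> g)"
  by (simp add: gcomm_def inv_mult_group m_assoc)

lemma gcomm_inv: "x \<in> carrier G \<Longrightarrow> y \<in> carrier G \<Longrightarrow>
   gcomm G (inv x) y = inv (inv x) \<otimes> inv (gcomm G x y) \<otimes> inv x"
  by (simp add: gcomm_def inv_mult_group m_assoc)

lemma gcomm_mult: "a \<in> carrier G \<Longrightarrow> b \<in> carrier G \<Longrightarrow> y \<in> carrier G \<Longrightarrow>
   gcomm G (a \<otimes> b) y = (inv b \<otimes> gcomm G a y \<otimes> b) \<otimes> gcomm G b y"
  by (simp add: gcomm_def inv_mult_group m_assoc)

end


context group begin

lemma comm_set_mono: "A \<subseteq> A' \<Longrightarrow> B \<subseteq> B' \<Longrightarrow> comm_set G A B \<subseteq> comm_set G A' B'"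
  unfolding comm_set_def by (rule mono_generate) blast

lemma iter_comm_mono: "A \<subseteq> A' \<Longrightarrow> iter_comm G A B k \<subseteq> iter_comm G A' B k"
proof (induction k)
  case (Suc k)
  then show ?case unfolding iter_comm_def by (simp add: comm_set_mono)
qed (simp add: iter_comm_def)

lemma iter_comm_Suc: "iter_comm G A B (Suc k) = iter_comm G (comm_set G A B) B k"
  unfolding iter_comm_def by (simp only: funpow_Suc_right o_def)

lemma conj_in_normal: "normal_subset G A \<Longrightarrow> a \<in> A \<Longrightarrow> g \<in> carrier G \<Longrightarrow> inv g \<otimes> a \<otimes> g \<in> A"
  unfolding normal_subset_def by blast

lemma comm_set_conj:
  assumes X: "normal_subset G X" and Y: "normal_subset G Y"
    and h: "h \<in> comm_set G X Y" and g: "g \<in> carrier G"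
  shows "inv g \<otimes> h \<otimes> g \<in> comm_set G X Y"
proof -
  have XC: "X \<subseteq> carrier G" and YC: "Y \<subseteq> carrier G" using X Y unfolding normal_subset_def by auto
  let ?S = "{gcomm G a b | a b. a \<in> X \<and> b \<in> Y}"
  have SC: "?S \<subseteq> carrier G" using XC YC by (auto intro!: gcomm_closed)
  have cS: "inv g \<otimes> s \<otimes> g \<in> ?S" if hs: "s \<in> ?S" for s
  proof -
    obtain a b where s: "s = gcomm G a b" "a \<in> X" "b \<in> Y" using hs by blast
    have ac: "a \<in> carrier G" and bc: "b \<in> carrier G" using s XC YC by auto
    have "inv g \<otimes> s \<otimes> g = gcomm G (inv g \<otimes> a \<otimes> g) (inv g \<otimes> b \<otimes> g)"
      using gcomm_conj[OF ac bc g] s(1) by simp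
    moreover have "inv g \<otimes> a \<otimes> g \<in> X" by (rule conj_in_normal[OF X s(2) g])
    moreover have "inv g \<otimes> b \<otimes> g \<in> Y" by (rule conj_in_normal[OF Y s(3) g])
    ultimately show ?thesis by blast
  qed
  have h': "h \<in> generate G ?S" using h unfolding comm_set_def .
  have "inv g \<otimes> h \<otimes> g \<in> generate G ?S"
    using h'
  proof (induction rule: generate.induct)
    case one then show ?case using g by (simp add: generate.one)
  next
    case (incl h) show ?case by (rule generate.incl[OF cS[OF incl]])
  next
    case (inv h)
    then have hc: "h \<in> carrier G" using SC by auto
    have "inv g \<otimes> inv h \<otimes> g = inv (inv g \<otimes> h \<otimes> g)"
      using hc g by (simp add: inv_mult_group m_assoc)
    then show ?case using cS[OF inv] by (simp add: generate.inv)
  next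
    case (eng h1 h2)
    have c: "h1 \<in> carrier G" "h2 \<in> carrier G" using eng(1,2) generate_in_carrier[OF SC] by auto
    have "inv g \<otimes> (h1 \<otimes> h2) \<otimes> g = (inv g \<otimes> h1 \<otimes> g) \<otimes> (inv g \<otimes> h2 \<otimes> g)"
      using c g by (simp add: m_assoc)
    then show ?case using eng(3,4) by (simp add: generate.eng)
  qed
  then show ?thesis unfolding comm_set_def .
qed

lemma comm_gen_in:
  assumes X: "normal_subset G X" and Y: "normal_subset G Y"
    and a: "a \<in> generate G X" and y: "y \<in> Y"
  shows "gcomm G a y \<in> comm_set G X Y"
proof -
  have XC: "X \<subseteq> carrier G" and YC: "Y \<subseteq> carrier G" using X Y unfolding normal_subset_def by auto
  let ?S = "{gcomm G a b | a b. a \<in> X \<and> b \<in> Y}"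
  have SC: "?S \<subseteq> carrier G" using XC YC by (auto intro!: gcomm_closed)
  have yc: "y \<in> carrier G" using y YC by auto
  have sub: "subgroup (comm_set G X Y) G" unfolding comm_set_def by (rule generate_is_subgroup[OF SC])
  from a show ?thesis
  proof (induction rule: generate.induct)
    case one then show ?case using yc
      by (simp add: gcomm_def comm_set_def generate.one)
  next
    case (incl h)
    have "gcomm G h y \<in> ?S" using incl y by blast
    then show ?case unfolding comm_set_def by (rule generate.incl)
  next
    case (inv h)
    then have hc: "h \<in> carrier G" using XC by auto
    have "gcomm G h y \<in> ?S" using inv y by blast
    then have "gcomm G h y \<in> comm_set G X Y" unfolding comm_set_def by (rule generate.incl)
    then have "inv (gcomm G h y) \<in> comm_set G X Y" using subgroup.m_inv_closed[OF sub] by blast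
    then show ?case using gcomm_inv[OF hc yc] comm_set_conj[OF X Y, of _ "inv h"] hc by simp
  next
    case (eng h1 h2)
    have c: "h1 \<in> carrier G" "h2 \<in> carrier G" using eng(1,2) generate_in_carrier[OF XC] by auto
    show ?case using gcomm_mult[OF c yc] comm_set_conj[OF X Y eng(3), of h2] c eng(4)
      subgroup.m_closed[OF sub] by simp
  qed
qed

lemma comm_G_sub:
  assumes X: "normal_subset G X"
  shows "comm_set G X (carrier G) \<subseteq> generate G X"
proof -
  have XC: "X \<subseteq> carrier G" using X unfolding normal_subset_def by auto
  show ?thesis unfolding comm_set_def
  proof (rule generate_subgroup_incl[OF _ generate_is_subgroup[OF XC]], safe)
    fix a b assume a: "a \<in> X" and b: "b \<in> carrier G"
    have ac: "a \<in> carrier G" using a XC by auto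
    have "gcomm G a b = inv a \<otimes> (inv b \<otimes> a \<otimes> b)" using ac b by (simp add: gcomm_def m_assoc)
    moreover have "inv b \<otimes> a \<otimes> b \<in> X" using conj_in_normal[OF X a b] .
    ultimately show "gcomm G a b \<in> generate G X" using a by (metis generate.eng generate.inv generate.incl)
  qed
qed

lemma step2:
  assumes X: "normal_subset G X" and Y: "normal_subset G Y"
  shows "comm_set G (comm_set G X (carrier G)) Y \<subseteq> comm_set G X Y"
proof -
  have XC: "X \<subseteq> carrier G" and YC: "Y \<subseteq> carrier G" using X Y unfolding normal_subset_def by auto
  let ?S = "{gcomm G a b | a b. a \<in> X \<and> b \<in> Y}"
  have SC: "?S \<subseteq> carrier G" using XC YC by (auto intro!: gcomm_closed)
  have sub: "subgroup (comm_set G X Y) G" unfolding comm_set_def by (rule generate_is_subgroup[OF SC])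
  show ?thesis unfolding comm_set_def[of G "comm_set G X (carrier G)"]
  proof (rule generate_subgroup_incl[OF _ sub], safe)
    fix a b assume a: "a \<in> comm_set G X (carrier G)" and b: "b \<in> Y"
    have "a \<in> generate G X" using comm_G_sub[OF X] a by (rule subsetD)
    then show "gcomm G a b \<in> comm_set G X Y" by (rule comm_gen_in[OF X Y _ b])
  qed
qed

end

theorem lemma2p2:
  fixes G :: "('a, 'b) monoid_scheme" (structure) and M :: nat and X Y :: "'a set"
  assumes "group G" and "finite (carrier G)"
    and M_stab: "\<And>A B i. normal_subset G A \<Longrightarrow> normal_subset G B \<Longrightarrow> M \<le> i \<Longrightarrow>
                   iter_comm G A B M = iter_comm G A B i"
    and "normal_subset G X" and "normal_subset G Y"
  shows "iter_comm G X Y M = iter_comm G (comm_set G X (carrier G)) Y M"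
proof -
  interpret group G by fact
  have e: "normal_subset G {}" unfolding normal_subset_def by auto
  obtain m where m: "M = Suc m"
  proof (cases M)
    case 0
    have "iter_comm G {} {} 0 = iter_comm G {} {} 1" using M_stab[OF e e] 0 by simp
    then have False by (simp add: iter_comm_def comm_set_def generate_empty)
    then show ?thesis ..
  qed auto
  have "iter_comm G X Y M = iter_comm G X Y (Suc M)" using M_stab[OF assms(4,5)] by simp
  also have "\<dots> = iter_comm G (comm_set G X Y) Y M" by (rule iter_comm_Suc)
  also have "\<dots> \<subseteq> iter_comm G (comm_set G X (carrier G)) Y M"
    apply (rule iter_comm_mono, rule comm_set_mono)
    using assms(5) unfolding normal_subset_def by auto
  finally have 1: "iter_comm G X Y M \<subseteq> iter_comm G (comm_set G X (carrier G)) Y M" .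
  have "iter_comm G (comm_set G X (carrier G)) Y M
      = iter_comm G (comm_set G (comm_set G X (carrier G)) Y) Y m" unfolding m by (rule iter_comm_Suc)
  also have "\<dots> \<subseteq> iter_comm G (comm_set G X Y) Y m"
    by (rule iter_comm_mono, rule step2[OF assms(4,5)])
  also have "\<dots> = iter_comm G X Y M" unfolding m by (rule iter_comm_Suc[symmetric])
  finally show ?thesis using 1 by (rule equalityI[rotated])
qed

end
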